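(* Fix $\nu>1$ and $F>2$. Let $\gamma_{1,+}(\lambda,\eta)$ denote an eigenvalue of smallest real part of the matrix $G(+\infty;\lambda,\eta)$. Then $\Re\gamma_{1,+}(\lambda,\eta)$ is bounded from below on $\{(\lambda,\eta):\Re\lambda\ge0,\ \eta\in\mathbb{R}\}$.
   Context: Set $H=\nu^{-2}$, $Q=\nu^{-3}$, $s=\frac{\nu^2+\nu+1}{\nu(\nu+1)}$, and $A_1=\begin{pmatrix}-s&1&0\\ H/F^2-Q^2/H^2&2Q/H-s&0\\0&0&Q/H-s\end{pmatrix}$, $A_2=\begin{pmatrix}0&0&1\\0&0&Q/H\\ H/F^2&0&0\end{pmatrix}$, $E=\begin{pmatrix}0&0&0\\ 2Q^2/H^3+1&-2Q/H^2&0\\0&0&-Q/H^2\end{pmatrix}$ (here $A_1$ is invertible since $F\ne(\nu+1)/\nu^2$), and $G(+\infty;\lambda,\eta)=(E-\lambda I-i\eta A_2)A_1^{-1}$. This is the limiting matrix at the downstream endstate of a hydraulic shock of the inviscid Saint-Venant equations with Froude number $F$ and endstates $(1,1,0)$, $(\nu^{-2},\nu^{-3},0)$. *)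

theory Defs
  imports "HOL-Analysis.Analysis"
begin

text \<open>Endstate quantities of the hydraulic shock (downstream endstate).\<close>

definition HH :: "real \<Rightarrow> real" where "HH \<nu> = \<nu> powi (-2)"
definition QQ :: "real \<Rightarrow> real" where "QQ \<nu> = \<nu> powi (-3)"
definition ss :: "real \<Rightarrow> real" where "ss \<nu> = (\<nu>^2 + \<nu> + 1) / (\<nu> * (\<nu> + 1))"

definition A1 :: "real \<Rightarrow> real \<Rightarrow> complex^3^3" where
  "A1 \<nu> F = (let H = HH \<nu>; Q = QQ \<nu>; s = ss \<nu> in
     vector [vector [complex_of_real (-s), 1, 0],
             vector [complex_of_real (H / F^2 - Q^2 / H^2), complex_of_real (2*Q/H - s), 0],
             vector [0, 0, complex_of_real (Q/H - s)]])"

definition A2 :: "real \<Rightarrow> real \<Rightarrow> complex^3^3" where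
  "A2 \<nu> F = (let H = HH \<nu>; Q = QQ \<nu> in
     vector [vector [0, 0, 1],
             vector [0, 0, complex_of_real (Q/H)],
             vector [complex_of_real (H / F^2), 0, 0]])"

definition EE :: "real \<Rightarrow> complex^3^3" where
  "EE \<nu> = (let H = HH \<nu>; Q = QQ \<nu> in
     vector [vector [0, 0, 0],
             vector [complex_of_real (2*Q^2/H^3 + 1), complex_of_real (-2*Q/H^2), 0],
             vector [0, 0, complex_of_real (-Q/H^2)]])"

definition Gplus :: "real \<Rightarrow> real \<Rightarrow> complex \<Rightarrow> real \<Rightarrow> complex^3^3" where
  "Gplus \<nu> F lam \<eta> =
     (EE \<nu> - mat lam - mat (\<i> * complex_of_real \<eta>) ** A2 \<nu> F) ** matrix_inv (A1 \<nu> F)"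

definition is_eigenvalue :: "complex^'n^'n \<Rightarrow> complex \<Rightarrow> bool" where
  "is_eigenvalue M \<gamma> \<longleftrightarrow> (\<exists>v. v \<noteq> 0 \<and> M *v v = \<gamma> *s v)"

end

theory Submission imports Defs begin


lemma quad_nonpos:
  fixes al be de x1 x2 :: real
  assumes "de < 0" "al * de - be^2 \<ge> 0"
  shows "al*x1^2 + 2*be*x1*x2 + de*x2^2 \<le> 0"
proof -
  have "de * (al*x1^2 + 2*be*x1*x2 + de*x2^2) = (de*x2 + be*x1)^2 + (al*de - be^2)*x1^2"
    by (simp add: power2_eq_square algebra_simps)
  also have "\<dots> \<ge> 0" using assms by simp
  finally show ?thesis using assms(1) by (simp add: mult_le_0_iff zero_le_mult_iff)
qed

lemma quad_neg:
  fixes p m r x1 x2 x3 :: real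
  assumes "r < 0" "p*r - m^2 > 0" "x1 \<noteq> 0 \<or> x2 \<noteq> 0 \<or> x3 \<noteq> 0"
  shows "p*x1^2 + 2*m*x1*x2 + r*x2^2 + r*x3^2 < 0"
proof -
  have "r * (p*x1^2 + 2*m*x1*x2 + r*x2^2 + r*x3^2) = (r*x2 + m*x1)^2 + (p*r - m^2)*x1^2 + r^2*x3^2"
    by (simp add: power2_eq_square algebra_simps)
  also have "\<dots> > 0"
  proof -
    consider "x1 \<noteq> 0" | "x1 = 0" "x2 \<noteq> 0" | "x3 \<noteq> 0" using assms(3) by blast
    then show ?thesis
    proof cases
      case 1 then show ?thesis using assms(2)
        by (simp add: add_pos_nonneg add_nonneg_pos)
    next
      case 2 then show ?thesis using assms(1) by (simp add: add_pos_nonneg)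
    next
      case 3 then show ?thesis using assms(1,2)
        by (intro add_nonneg_pos add_nonneg_nonneg) auto
    qed
  qed
  finally show ?thesis using assms(1) by (simp add: zero_less_mult_iff)
qed

lemma exists_L:
  fixes a b s nu :: real
  assumes ha: "a > 0" and hb: "b > 0" and hnu: "nu > 0" and ht: "s - a > 0" and htb: "(s-a)^2 > b"
  shows "\<exists>L\<ge>0. \<forall>x1 x2 x3. (-3*a*x1^2 + (2*a*nu+3)*x1*x2 - 2*nu*x2^2 - nu*x3^2)
     + L*((-(a^2*(s-a)) - b*(s+a))*x1^2 + 2*(b + a*(s-a))*x1*x2 + (a - s)*x2^2 + (a - s)*x3^2) \<le> 0"
proof -
  define p where "p = -(a^2*(s-a)) - b*(s+a)"
  define m where "m = b + a*(s-a)"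
  define r where "r = a - s"
  define D where "D = p*r - m^2"
  define B where "B = -2*nu*p - 3*a*r - m*(2*a*nu+3)"
  define K0 where "K0 = 6*a*nu - (2*a*nu+3)^2/4"
  define L where "L = (\<bar>B\<bar> + \<bar>K0\<bar> + 1)/D + 1"
  have D_eq: "D = b*((s-a)^2 - b)" unfolding D_def p_def r_def m_def
    by (simp add: power2_eq_square algebra_simps)
  have Dpos: "D > 0" unfolding D_eq using hb htb by simp
  have L1: "L \<ge> 1" unfolding L_def using Dpos by simp
  have "D*L = (\<bar>B\<bar> + \<bar>K0\<bar> + 1) + D" unfolding L_def using Dpos
    by (simp add: field_simps)
  then have DL: "D*L \<ge> \<bar>B\<bar> + \<bar>K0\<bar> + 1" using Dpos by simp
  have "(\<bar>B\<bar> + \<bar>K0\<bar> + 1)*L \<le> (D*L)*L"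
    using DL L1 by (intro mult_right_mono) auto
  then have k1: "(\<bar>B\<bar> + \<bar>K0\<bar> + 1)*L \<le> D*L^2" by (simp add: power2_eq_square mult.assoc)
  have k2: "(\<bar>K0\<bar> + 1)*1 \<le> (\<bar>K0\<bar> + 1)*L" using L1 by (intro mult_left_mono) auto
  have k3: "-\<bar>B\<bar>*L \<le> B*L" using L1 by (intro mult_right_mono) auto
  have k4: "-\<bar>K0\<bar> \<le> K0" by simp
  have key: "D*L^2 + B*L + K0 \<ge> 0"
    using k1 k2 k3 k4 by (simp add: distrib_right)
  have "a^2*(s-a) > 0" "b*(s+a) > 0" using ha hb ht by auto
  then have pneg: "p < 0" unfolding p_def by linarith
  have rneg: "r < 0" unfolding r_def using ht by simp
  define al where "al = L*p - 3*a"
  define be where "be = (2*L*m + 2*a*nu+3)/2"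
  define de where "de = L*r - 2*nu"
  have "L*r < 0" using rneg L1 by (simp add: mult_pos_neg)
  then have de_neg: "de < 0" unfolding de_def using hnu by linarith
  have "al*de - be^2 = D*L^2 + B*L + K0"
    unfolding al_def be_def de_def D_def B_def K0_def
    by (simp add: power2_eq_square algebra_simps add_divide_distrib diff_divide_distrib)
  then have disc: "al*de - be^2 \<ge> 0" using key by simp
  have x3c: "-nu + L*r \<le> 0" using \<open>L*r < 0\<close> hnu by linarith
  show ?thesis
  proof (intro exI[of _ L] conjI allI)
    show "L \<ge> 0" using L1 by simp
    fix x1 x2 x3 :: real
    have q: "al*x1^2 + 2*be*x1*x2 + de*x2^2 \<le> 0" by (rule quad_nonpos[OF de_neg disc])
    have q3: "(-nu + L*r)*x3^2 \<le> 0" using x3c by (simp add: mult_nonpos_nonneg)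
    have "(-3*a*x1^2 + (2*a*nu+3)*x1*x2 - 2*nu*x2^2 - nu*x3^2)
     + L*((-(a^2*(s-a)) - b*(s+a))*x1^2 + 2*(b + a*(s-a))*x1*x2 + (a - s)*x2^2 + (a - s)*x3^2)
      = (al*x1^2 + 2*be*x1*x2 + de*x2^2) + (-nu + L*r)*x3^2"
      unfolding al_def be_def de_def p_def m_def r_def by (simp add: field_simps)
    then show "(-3*a*x1^2 + (2*a*nu+3)*x1*x2 - 2*nu*x2^2 - nu*x3^2)
     + L*((-(a^2*(s-a)) - b*(s+a))*x1^2 + 2*(b + a*(s-a))*x1*x2 + (a - s)*x2^2 + (a - s)*x3^2) \<le> 0"
      using q q3 by simp
  qed
qed

lemma re_identity:
  fixes xa ya xb yb xc yc lr li gr gi a b s nu eta :: real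
  shows "Re (cnj (Complex xa ya) * ((a^2+b)*(-(Complex lr li)*(Complex xa ya) - \<i>*eta*(Complex xc yc) - (Complex gr gi)*(-s*(Complex xa ya) + (Complex xb yb)))
                 - a*(3*(Complex xa ya) + (-2*nu - (Complex lr li))*(Complex xb yb) - \<i>*eta*a*(Complex xc yc) - (Complex gr gi)*((b - a^2)*(Complex xa ya) + (2*a - s)*(Complex xb yb))))
           + cnj (Complex xb yb) * (-a*(-(Complex lr li)*(Complex xa ya) - \<i>*eta*(Complex xc yc) - (Complex gr gi)*(-s*(Complex xa ya) + (Complex xb yb)))
                 + (3*(Complex xa ya) + (-2*nu - (Complex lr li))*(Complex xb yb) - \<i>*eta*a*(Complex xc yc) - (Complex gr gi)*((b - a^2)*(Complex xa ya) + (2*a - s)*(Complex xb yb))))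
           + cnj (Complex xc yc) * (-\<i>*eta*b*(Complex xa ya) + (-nu - (Complex lr li))*(Complex xc yc) - (Complex gr gi)*(a - s)*(Complex xc yc)))
    = ((-3*a*xa^2 + (2*a*nu+3)*xa*xb - 2*nu*xb^2 - nu*xc^2) + (-3*a*ya^2 + (2*a*nu+3)*ya*yb - 2*nu*yb^2 - nu*yc^2))
      - lr*(((a^2+b)*xa^2 - 2*a*xa*xb + xb^2 + xc^2) + ((a^2+b)*ya^2 - 2*a*ya*yb + yb^2 + yc^2))
      - gr*(((-(a^2*(s-a)) - b*(s+a))*xa^2 + 2*(b + a*(s-a))*xa*xb + (a - s)*xb^2 + (a - s)*xc^2)
          + ((-(a^2*(s-a)) - b*(s+a))*ya^2 + 2*(b + a*(s-a))*ya*yb + (a - s)*yb^2 + (a - s)*yc^2))"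
  by (simp add: power2_eq_square algebra_simps)

lemma HQ_simps:
  fixes nu F :: real
  assumes "nu > 0"
  shows "HH nu = 1/nu^2" "QQ nu = 1/nu^3"
  using assms by (simp_all add: HH_def QQ_def power_int_def divide_inverse power_inverse)

lemma mat_mult_entry: "(mat c ** (A::'a::comm_ring_1^'n^'m)) $ i $ j = c * A $ i $ j"
proof -
  have "(mat c ** A) $ i $ j = (\<Sum>k\<in>UNIV. (if i = k then c else 0) * A$k$j)"
    by (simp add: matrix_matrix_mult_def mat_def)
  also have "\<dots> = (\<Sum>k\<in>UNIV. if i = k then c * A$k$j else 0)"
    by (rule sum.cong) auto
  also have "\<dots> = c * A $ i $ j" by (simp add: sum.delta)
  finally show ?thesis .
qed

lemma A1_eq:
  fixes nu F :: real
  assumes "nu > 0"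
  shows "A1 nu F = vector [vector [complex_of_real (-ss nu), 1, 0],
             vector [complex_of_real (1/(nu^2*F^2) - (1/nu)^2), complex_of_real (2*(1/nu) - ss nu), 0],
             vector [0, 0, complex_of_real (1/nu - ss nu)]]"
  using assms unfolding A1_def Let_def HQ_simps[OF assms]
  by (simp add: field_simps power2_eq_square power3_eq_cube)

lemma A2_eq:
  fixes nu F :: real
  assumes "nu > 0"
  shows "A2 nu F = vector [vector [0, 0, 1],
             vector [0, 0, complex_of_real (1/nu)],
             vector [complex_of_real (1/(nu^2*F^2)), 0, 0]]"
  using assms unfolding A2_def Let_def HQ_simps[OF assms]
  by (simp add: field_simps power2_eq_square power3_eq_cube)

lemma EE_eq:
  fixes nu :: real
  assumes "nu > 0"
  shows "EE nu = vector [vector [0, 0, 0],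
             vector [3, complex_of_real (-2*nu), 0],
             vector [0, 0, complex_of_real (-nu)]]"
  using assms unfolding EE_def Let_def HQ_simps[OF assms]
  by (simp add: field_simps power2_eq_square power3_eq_cube)

lemma re_identity2:
  fixes w1 w2 w3 lam g :: complex and a b s nu eta :: real
  shows "Re (cnj w1 * ((a^2+b)*(-lam*w1 - \<i>*eta*w3 - g*(-s*w1 + w2))
                 - a*(3*w1 + (-2*nu - lam)*w2 - \<i>*eta*a*w3 - g*((b - a^2)*w1 + (2*a - s)*w2)))
           + cnj w2 * (-a*(-lam*w1 - \<i>*eta*w3 - g*(-s*w1 + w2))
                 + (3*w1 + (-2*nu - lam)*w2 - \<i>*eta*a*w3 - g*((b - a^2)*w1 + (2*a - s)*w2)))
           + cnj w3 * (-\<i>*eta*b*w1 + (-nu - lam)*w3 - g*(a - s)*w3))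
    = ((-3*a*(Re w1)^2 + (2*a*nu+3)*(Re w1)*(Re w2) - 2*nu*(Re w2)^2 - nu*(Re w3)^2) + (-3*a*(Im w1)^2 + (2*a*nu+3)*(Im w1)*(Im w2) - 2*nu*(Im w2)^2 - nu*(Im w3)^2))
      - Re lam*(((a^2+b)*(Re w1)^2 - 2*a*(Re w1)*(Re w2) + (Re w2)^2 + (Re w3)^2) + ((a^2+b)*(Im w1)^2 - 2*a*(Im w1)*(Im w2) + (Im w2)^2 + (Im w3)^2))
      - Re g*(((-(a^2*(s-a)) - b*(s+a))*(Re w1)^2 + 2*(b + a*(s-a))*(Re w1)*(Re w2) + (a - s)*(Re w2)^2 + (a - s)*(Re w3)^2)
          + ((-(a^2*(s-a)) - b*(s+a))*(Im w1)^2 + 2*(b + a*(s-a))*(Im w1)*(Im w2) + (a - s)*(Im w2)^2 + (a - s)*(Im w3)^2))"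
  using re_identity[where xa="Re w1" and ya="Im w1" and xb="Re w2" and yb="Im w2" and xc="Re w3" and yc="Im w3"
     and lr="Re lam" and li="Im lam" and gr="Re g" and gi="Im g"]
  by simp

lemma param_facts:
  fixes nu F :: real
  assumes "nu > 1" "F > 2"
  shows "1/nu > 0" "1/(nu^2*F^2) > 0" "ss nu - 1/nu > 0" "(ss nu - 1/nu)^2 > 1/(nu^2*F^2)"
proof -
  have n0: "nu \<noteq> 0" "nu + 1 \<noteq> 0" "nu + nu*nu \<noteq> 0" using assms by (auto, smt (verit) mult_pos_pos)
  have e1: "1/nu = (nu+1)/(nu*(nu+1))" using n0 by simp
  have e2: "nu/(nu+1) = nu^2/(nu*(nu+1))" using n0 by (simp add: power2_eq_square)
  have "ss nu - 1/nu = (nu^2+nu+1)/(nu*(nu+1)) - (nu+1)/(nu*(nu+1))"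
    unfolding ss_def by (subst e1) (rule refl)
  also have "\<dots> = ((nu^2+nu+1) - (nu+1))/(nu*(nu+1))" by (rule diff_divide_distrib[symmetric])
  also have "\<dots> = nu^2/(nu*(nu+1))" by simp
  also have "\<dots> = nu/(nu+1)" using e2 by simp
  finally have sa: "ss nu - 1/nu = nu/(nu+1)" .
  show "1/nu > 0" "1/(nu^2*F^2) > 0" using assms by auto
  show "ss nu - 1/nu > 0" unfolding sa using assms by simp
  have h1: "nu/(nu+1) > 1/2" using assms by (simp add: field_simps)
  then have "(nu/(nu+1))^2 > (1/2)^2" by (intro power_strict_mono) auto
  moreover have "1/(nu^2*F^2) < 1/4"
  proof -
    have "nu^2 > 1" using assms by simp
    moreover have "2*2 < F*F" using assms by (intro mult_strict_mono) auto
    then have "F^2 > 4" by (simp add: power2_eq_square)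
    ultimately have "1*F^2 \<le> nu^2*F^2" by (intro mult_right_mono) auto
    with \<open>F^2 > 4\<close> have "nu^2*F^2 > 4" by simp
    then show ?thesis by (simp add: field_simps)
  qed
  moreover have "(1/2::real)^2 = 1/4" by (simp add: power2_eq_square)
  ultimately show "(ss nu - 1/nu)^2 > 1/(nu^2*F^2)" unfolding sa by linarith
qed

lemma QS_nonneg:
  fixes a b x1 x2 x3 :: real
  assumes "b > 0"
  shows "(a^2+b)*x1^2 - 2*a*x1*x2 + x2^2 + x3^2 \<ge> 0"
proof -
  have "(a^2+b)*x1^2 - 2*a*x1*x2 + x2^2 + x3^2 = (a*x1 - x2)^2 + b*x1^2 + x3^2"
    by (simp add: power2_eq_square algebra_simps)
  then show ?thesis using assms by simp
qed

lemma Q1_props: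
  fixes a b s x1 x2 x3 :: real
  assumes hb: "b > 0" and ht: "s - a > 0" and htb: "(s-a)^2 > b"
  shows "(-(a^2*(s-a)) - b*(s+a))*x1^2 + 2*(b + a*(s-a))*x1*x2 + (a - s)*x2^2 + (a - s)*x3^2 \<le> 0"
    and "x1 \<noteq> 0 \<or> x2 \<noteq> 0 \<or> x3 \<noteq> 0 \<Longrightarrow>
      (-(a^2*(s-a)) - b*(s+a))*x1^2 + 2*(b + a*(s-a))*x1*x2 + (a - s)*x2^2 + (a - s)*x3^2 < 0"
proof -
  have D: "(-(a^2*(s-a)) - b*(s+a))*(a-s) - (b + a*(s-a))^2 = b*((s-a)^2-b)"
    by (simp add: power2_eq_square algebra_simps)
  have Dp: "(-(a^2*(s-a)) - b*(s+a))*(a-s) - (b + a*(s-a))^2 > 0" unfolding D using hb htb by simp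
  have r: "a - s < 0" using ht by simp
  show lt: "x1 \<noteq> 0 \<or> x2 \<noteq> 0 \<or> x3 \<noteq> 0 \<Longrightarrow>
      (-(a^2*(s-a)) - b*(s+a))*x1^2 + 2*(b + a*(s-a))*x1*x2 + (a - s)*x2^2 + (a - s)*x3^2 < 0"
    by (rule quad_neg[OF r Dp])
  show "(-(a^2*(s-a)) - b*(s+a))*x1^2 + 2*(b + a*(s-a))*x1*x2 + (a - s)*x2^2 + (a - s)*x3^2 \<le> 0"
  proof (cases "x1 \<noteq> 0 \<or> x2 \<noteq> 0 \<or> x3 \<noteq> 0")
    case True then show ?thesis using lt by fastforce
  next
    case False then show ?thesis by simp
  qed
qed

theorem mainTheorem4:
  fixes \<nu> F :: real
  assumes "\<nu> > 1" and "F > 2"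
  shows "\<exists>C::real. \<forall>(lam::complex) (\<eta>::real) (\<gamma>::complex).
           Re lam \<ge> 0 \<longrightarrow> is_eigenvalue (Gplus \<nu> F lam \<eta>) \<gamma> \<longrightarrow> C \<le> Re \<gamma>"
proof -
  define a where "a = 1/\<nu>"
  define b where "b = 1/(\<nu>^2*F^2)"
  define s where "s = ss \<nu>"
  have nupos: "\<nu> > 0" using assms by simp
  have ha: "a > 0" and hb: "b > 0" and ht: "s - a > 0" and htb: "(s-a)^2 > b"
    using param_facts[OF assms] unfolding a_def b_def s_def by auto
  have anu: "a*\<nu> = 1" unfolding a_def using nupos by simp
  obtain L where L0: "L \<ge> 0" and hL: "\<And>x1 x2 x3. (-3*a*x1^2 + (2*a*\<nu>+3)*x1*x2 - 2*\<nu>*x2^2 - \<nu>*x3^2)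
     + L*((-(a^2*(s-a)) - b*(s+a))*x1^2 + 2*(b + a*(s-a))*x1*x2 + (a - s)*x2^2 + (a - s)*x3^2) \<le> 0"
    using exists_L[OF ha hb nupos ht htb] by blast
  have A1e: "A1 \<nu> F = vector [vector [complex_of_real (-s), 1, 0],
             vector [complex_of_real (b - a^2), complex_of_real (2*a - s), 0],
             vector [0, 0, complex_of_real (a - s)]]"
    unfolding A1_eq[OF nupos] a_def b_def s_def by simp
  have A2e: "A2 \<nu> F = vector [vector [0, 0, 1],
             vector [0, 0, complex_of_real a],
             vector [complex_of_real b, 0, 0]]"
    unfolding A2_eq[OF nupos] a_def b_def by simp
  have detA: "det (A1 \<nu> F) \<noteq> 0"
  proof -
    have "det (A1 \<nu> F) = complex_of_real ((a - s) * ((s-a)^2 - b))"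
      unfolding A1e det_3 by (simp add: power2_eq_square algebra_simps)
    moreover have "(a - s) * ((s-a)^2 - b) \<noteq> 0" using ht htb by simp
    ultimately show ?thesis by (metis of_real_eq_0_iff)
  qed
  have inv: "invertible (A1 \<nu> F)" using detA invertible_det_nz by blast
  have AAi: "A1 \<nu> F ** matrix_inv (A1 \<nu> F) = mat 1"
    using inv unfolding invertible_def matrix_inv_def by (rule someI_ex[THEN conjunct1])
  show ?thesis
  proof (intro exI[of _ "-L"] allI impI)
    fix lam :: complex and \<eta> :: real and \<gamma> :: complex
    assume hl: "0 \<le> Re lam" and hev: "is_eigenvalue (Gplus \<nu> F lam \<eta>) \<gamma>"
    obtain v where v0: "v \<noteq> 0" and hv: "Gplus \<nu> F lam \<eta> *v v = \<gamma> *s v"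
      using hev unfolding is_eigenvalue_def by blast
    define N where "N = EE \<nu> - mat lam - mat (\<i> * complex_of_real \<eta>) ** A2 \<nu> F"
    define w where "w = matrix_inv (A1 \<nu> F) *v v"
    have vw: "A1 \<nu> F *v w = v" unfolding w_def matrix_vector_mul_assoc AAi by simp
    have w0: "w \<noteq> 0" using v0 vw by auto
    have eq: "N *v w = \<gamma> *s (A1 \<nu> F *v w)"
    proof -
      have "N *v w = Gplus \<nu> F lam \<eta> *v v"
        unfolding N_def w_def Gplus_def by (simp add: matrix_vector_mul_assoc)
      then show ?thesis using hv vw by simp
    qed
    have Ne: "N $ i $ j = EE \<nu> $ i $ j - (if i = j then lam else 0) - (\<i> * complex_of_real \<eta>) * A2 \<nu> F $ i $ j" for i j
      unfolding N_def by (simp only: vector_minus_component mat_mult_entry) (simp add: mat_def)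
    define w1 where "w1 = w$1"
    define w2 where "w2 = w$2"
    define w3 where "w3 = w$3"
    have c1: "(N *v w)$1 = \<gamma> * (A1 \<nu> F *v w)$1" using eq by simp
    have c2: "(N *v w)$2 = \<gamma> * (A1 \<nu> F *v w)$2" using eq by simp
    have c3: "(N *v w)$3 = \<gamma> * (A1 \<nu> F *v w)$3" using eq by simp
    have e1: "-lam*w1 - \<i>*\<eta>*w3 - \<gamma>*(-s*w1 + w2) = 0"
      using c1 unfolding w1_def w2_def w3_def
      by (simp add: matrix_vector_mult_def sum_3 Ne A1e A2e EE_eq[OF nupos] algebra_simps)
    have e2: "3*w1 + (-2*\<nu> - lam)*w2 - \<i>*\<eta>*a*w3 - \<gamma>*((b - a^2)*w1 + (2*a - s)*w2) = 0"
      using c2 unfolding w1_def w2_def w3_def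
      by (simp add: matrix_vector_mult_def sum_3 Ne A1e A2e EE_eq[OF nupos] algebra_simps)
    have e3: "-\<i>*\<eta>*b*w1 + (-\<nu> - lam)*w3 - \<gamma>*(a - s)*w3 = 0"
      using c3 unfolding w1_def w2_def w3_def
      by (simp add: matrix_vector_mult_def sum_3 Ne A1e A2e EE_eq[OF nupos] algebra_simps)
    have R: "((-3*a*(Re w1)^2 + (2*a*\<nu>+3)*(Re w1)*(Re w2) - 2*\<nu>*(Re w2)^2 - \<nu>*(Re w3)^2) + (-3*a*(Im w1)^2 + (2*a*\<nu>+3)*(Im w1)*(Im w2) - 2*\<nu>*(Im w2)^2 - \<nu>*(Im w3)^2))
      - Re lam*(((a^2+b)*(Re w1)^2 - 2*a*(Re w1)*(Re w2) + (Re w2)^2 + (Re w3)^2) + ((a^2+b)*(Im w1)^2 - 2*a*(Im w1)*(Im w2) + (Im w2)^2 + (Im w3)^2))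
      - Re \<gamma>*(((-(a^2*(s-a)) - b*(s+a))*(Re w1)^2 + 2*(b + a*(s-a))*(Re w1)*(Re w2) + (a - s)*(Re w2)^2 + (a - s)*(Re w3)^2)
          + ((-(a^2*(s-a)) - b*(s+a))*(Im w1)^2 + 2*(b + a*(s-a))*(Im w1)*(Im w2) + (a - s)*(Im w2)^2 + (a - s)*(Im w3)^2)) = 0"
      using re_identity2[of w1 a b lam \<eta> w3 \<gamma> s w2 \<nu>, symmetric] unfolding e1 e2 e3 by simp
    define QEx where "QEx = (-3*a*(Re w1)^2 + (2*a*\<nu>+3)*(Re w1)*(Re w2) - 2*\<nu>*(Re w2)^2 - \<nu>*(Re w3)^2)"
    define QEy where "QEy = (-3*a*(Im w1)^2 + (2*a*\<nu>+3)*(Im w1)*(Im w2) - 2*\<nu>*(Im w2)^2 - \<nu>*(Im w3)^2)"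
    define QSx where "QSx = ((a^2+b)*(Re w1)^2 - 2*a*(Re w1)*(Re w2) + (Re w2)^2 + (Re w3)^2)"
    define QSy where "QSy = ((a^2+b)*(Im w1)^2 - 2*a*(Im w1)*(Im w2) + (Im w2)^2 + (Im w3)^2)"
    define Q1x where "Q1x = ((-(a^2*(s-a)) - b*(s+a))*(Re w1)^2 + 2*(b + a*(s-a))*(Re w1)*(Re w2) + (a - s)*(Re w2)^2 + (a - s)*(Re w3)^2)"
    define Q1y where "Q1y = ((-(a^2*(s-a)) - b*(s+a))*(Im w1)^2 + 2*(b + a*(s-a))*(Im w1)*(Im w2) + (a - s)*(Im w2)^2 + (a - s)*(Im w3)^2)"
    have R': "QEx + QEy - Re lam * (QSx + QSy) - Re \<gamma> * (Q1x + Q1y) = 0"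
      using R unfolding QEx_def QEy_def QSx_def QSy_def Q1x_def Q1y_def .
    have Sx: "QSx \<ge> 0" "QSy \<ge> 0" unfolding QSx_def QSy_def using QS_nonneg[OF hb] by auto
    have Ex: "QEx + L*Q1x \<le> 0" "QEy + L*Q1y \<le> 0" unfolding QEx_def QEy_def Q1x_def Q1y_def using hL by auto
    have Qx: "Q1x \<le> 0" "Q1y \<le> 0" unfolding Q1x_def Q1y_def using Q1_props(1)[OF hb ht htb] by auto
    have "w1 \<noteq> 0 \<or> w2 \<noteq> 0 \<or> w3 \<noteq> 0"
      using w0 unfolding w1_def w2_def w3_def by (auto simp: vec_eq_iff forall_3)
    then have "(Re w1 \<noteq> 0 \<or> Re w2 \<noteq> 0 \<or> Re w3 \<noteq> 0) \<or> (Im w1 \<noteq> 0 \<or> Im w2 \<noteq> 0 \<or> Im w3 \<noteq> 0)"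
      by (auto simp: complex_eq_iff)
    then have Qneg: "Q1x + Q1y < 0"
    proof
      assume "Re w1 \<noteq> 0 \<or> Re w2 \<noteq> 0 \<or> Re w3 \<noteq> 0"
      then have "Q1x < 0" unfolding Q1x_def by (rule Q1_props(2)[OF hb ht htb])
      then show ?thesis using Qx by simp
    next
      assume "Im w1 \<noteq> 0 \<or> Im w2 \<noteq> 0 \<or> Im w3 \<noteq> 0"
      then have "Q1y < 0" unfolding Q1y_def by (rule Q1_props(2)[OF hb ht htb])
      then show ?thesis using Qx by simp
    qed
    show "-L \<le> Re \<gamma>"
    proof (rule ccontr)
      assume "\<not> -L \<le> Re \<gamma>"
      then have "L + Re \<gamma> < 0" by simp
      then have p1: "(L + Re \<gamma>) * (Q1x + Q1y) > 0" using Qneg by (simp add: mult_neg_neg)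
      have p2: "Re lam * (QSx + QSy) \<ge> 0" using hl Sx by simp
      have "QEx + QEy - Re lam * (QSx + QSy) - Re \<gamma> * (Q1x + Q1y)
            \<le> - (L + Re \<gamma>) * (Q1x + Q1y)"
        using Ex p2 by (simp add: algebra_simps)
      moreover have "- (L + Re \<gamma>) * (Q1x + Q1y) = - ((L + Re \<gamma>) * (Q1x + Q1y))" by (simp add: algebra_simps)
      ultimately show False using R' p1 by linarith
    qed
  qed
qed

end
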